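(* Let $f,g:\mathbb R^N\to\mathbb R\cup\{+\infty\}$ be proper lsc convex with $\mathrm{ri}(\mathrm{dom}f)\cap\mathrm{ri}(\mathrm{dom}g)\neq\emptyset$ and $\mathrm{Argmin}(f+g)\neq\emptyset$. Let $\gamma>0$, $\tau_k\in]0,2[$ with $\sum_k\tau_k(2-\tau_k)=+\infty$, and consider the Douglas–Rachford iteration $v_{k+1}=\mathrm{prox}_{\gamma f}(2x_k-z_k)$, $z_{k+1}=z_k+\tau_k(v_{k+1}-x_k)$, $x_{k+1}=\mathrm{prox}_{\gamma g}(z_{k+1})$ (with $x_0=\mathrm{prox}_{\gamma g}(z_0)$). Then $z_k\to z^\star$, where $x^\star=\mathrm{prox}_{\gamma g}(z^\star)\in\mathrm{Argmin}(f+g)$, and $x_k\to x^\star$, $v_k\to x^\star$. Let $u^\star=(z^\star-x^\star)/\gamma$. (i) If $g$ is mirror-stratifiable with respect to $(\mathcal S^g,\mathcal S^{g^*})$, then for $k$ large enough $M^g_{x^\star}\le M^g_{x_k}\le J_{g^*}(M^{g^*}_{u^\star})$. (ii) If $f$ is mirror-stratifiable with respect to $(\mathcal S^f,\mathcal S^{f^*})$, then for $k$ large enough $M^f_{x^\star}\le M^f_{v_k}\le J_{f^*}(M^{f^*}_{-u^\star})$.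
   Context: $\mathrm{prox}_{\gamma h}(x)=\mathrm{argmin}_z\frac12\|z-x\|^2+\gamma h(z)$; $\mathrm{ri}$ = relative interior. A stratification of a set $D$ is a finite partition $\mathcal S$ of $D$ into nonempty sets called strata such that for any strata $M,M'$, $M\cap\mathrm{cl}(M')\neq\emptyset$ implies $M\subset\mathrm{cl}(M')$; ordered by $M\le M'$ iff $M\subset\mathrm{cl}(M')$. $M^h_x$ denotes the stratum of $\mathcal S^h$ containing $x$ (similarly for dual strata). For proper lsc convex $R$ with conjugate $R^*$, $J_R(S)=\bigcup_{x\in S}\mathrm{ri}(\partial R(x))$, $J_{R^*}$ analogously. $R$ is mirror-stratifiable with respect to a stratification $\mathcal S$ of $\mathrm{dom}(\partial R)$ and a stratification $\mathcal S^*$ of $\mathrm{dom}(\partial R^* )$ if (i) $J_R$ maps $\mathcal S$ bijectively onto $\mathcal S^*$ with inverse $J_{R^*}$, i.e. for all $M\in\mathcal S$, $M^*\in\mathcal S^*$: $M^*=J_R(M)\iff J_{R^*}(M^* )=M$; and (ii) for all $M,M'\in\mathcal S$: $M\le M'\iff J_R(M)\ge J_R(M')$. *)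

theory Defs
  imports "HOL-Analysis.Analysis"
begin

definition edom :: "('a \<Rightarrow> ereal) \<Rightarrow> 'a set" where
  "edom f = {x. f x < \<infinity>}"

definition proper_fun :: "('a \<Rightarrow> ereal) \<Rightarrow> bool" where
  "proper_fun f \<longleftrightarrow> (\<forall>x. f x \<noteq> -\<infinity>) \<and> (\<exists>x. f x < \<infinity>)"

definition lsc_fun :: "('a::topological_space \<Rightarrow> ereal) \<Rightarrow> bool" where
  "lsc_fun f \<longleftrightarrow> (\<forall>c::ereal. closed {x. f x \<le> c})"

definition convex_fun :: "('a::real_vector \<Rightarrow> ereal) \<Rightarrow> bool" where
  "convex_fun f \<longleftrightarrow> (\<forall>x y (t::real). 0 \<le> t \<and> t \<le> 1 \<longrightarrow>
      f ((1 - t) *\<^sub>R x + t *\<^sub>R y) \<le> ereal (1 - t) * f x + ereal t * f y)"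

definition proper_lsc_convex :: "('a::real_normed_vector \<Rightarrow> ereal) \<Rightarrow> bool" where
  "proper_lsc_convex f \<longleftrightarrow> proper_fun f \<and> lsc_fun f \<and> convex_fun f"

definition Argmin :: "('a \<Rightarrow> ereal) \<Rightarrow> 'a set" where
  "Argmin h = {x. \<forall>y. h x \<le> h y}"

text \<open>Proximal operator prox_{\<gamma> h}(x) = argmin_z 1/2 |z - x|^2 + \<gamma> h(z)
  (unique minimiser for proper lsc convex h and \<gamma> > 0).\<close>
definition prox :: "real \<Rightarrow> ('a::real_normed_vector \<Rightarrow> ereal) \<Rightarrow> 'a \<Rightarrow> 'a" where
  "prox \<gamma> h x = (THE z. \<forall>w. ereal ((1/2) * (norm (z - x))\<^sup>2) + ereal \<gamma> * h z
                         \<le> ereal ((1/2) * (norm (w - x))\<^sup>2) + ereal \<gamma> * h w)"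

definition conjugate :: "('a::real_inner \<Rightarrow> ereal) \<Rightarrow> 'a \<Rightarrow> ereal" where
  "conjugate R u = (SUP x. ereal (u \<bullet> x) - R x)"

definition subdiff :: "('a::real_inner \<Rightarrow> ereal) \<Rightarrow> 'a \<Rightarrow> 'a set" where
  "subdiff R x = {u. R x < \<infinity> \<and> (\<forall>y. R x + ereal (u \<bullet> (y - x)) \<le> R y)}"

definition dom_subdiff :: "('a::real_inner \<Rightarrow> ereal) \<Rightarrow> 'a set" where
  "dom_subdiff R = {x. subdiff R x \<noteq> {}}"

definition Jmap :: "('a::euclidean_space \<Rightarrow> ereal) \<Rightarrow> 'a set \<Rightarrow> 'a set" where
  "Jmap R S = (\<Union>x\<in>S. rel_interior (subdiff R x))"

definition stratification :: "'a::topological_space set set \<Rightarrow> 'a set \<Rightarrow> bool" where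
  "stratification \<S> D \<longleftrightarrow> finite \<S> \<and> {} \<notin> \<S> \<and> \<Union>\<S> = D
     \<and> (\<forall>M\<in>\<S>. \<forall>M'\<in>\<S>. M \<noteq> M' \<longrightarrow> M \<inter> M' = {})
     \<and> (\<forall>M\<in>\<S>. \<forall>M'\<in>\<S>. M \<inter> closure M' \<noteq> {} \<longrightarrow> M \<subseteq> closure M')"

definition strat_le :: "'a::topological_space set \<Rightarrow> 'a set \<Rightarrow> bool" where
  "strat_le M M' \<longleftrightarrow> M \<subseteq> closure M'"

definition stratum :: "'a set set \<Rightarrow> 'a \<Rightarrow> 'a set" where
  "stratum \<S> x = (THE M. M \<in> \<S> \<and> x \<in> M)"

definition mirror_stratifiable ::
  "('a::euclidean_space \<Rightarrow> ereal) \<Rightarrow> 'a set set \<Rightarrow> 'a set set \<Rightarrow> bool" where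
  "mirror_stratifiable R \<S> \<S>s \<longleftrightarrow>
     stratification \<S> (dom_subdiff R) \<and> stratification \<S>s (dom_subdiff (conjugate R))
     \<and> (\<forall>M\<in>\<S>. Jmap R M \<in> \<S>s) \<and> (\<forall>Ms\<in>\<S>s. Jmap (conjugate R) Ms \<in> \<S>)
     \<and> (\<forall>M\<in>\<S>. \<forall>Ms\<in>\<S>s. Ms = Jmap R M \<longleftrightarrow> Jmap (conjugate R) Ms = M)
     \<and> (\<forall>M\<in>\<S>. \<forall>M'\<in>\<S>. strat_le M M' \<longleftrightarrow> strat_le (Jmap R M') (Jmap R M))"

end

theory Submission
  imports Defs
begin


abbreviation hr :: "('a \<Rightarrow> ereal) \<Rightarrow> 'a \<Rightarrow> real" where "hr h x \<equiv> real_of_ereal (h x)"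

lemma proper_fin: "proper_fun h \<Longrightarrow> x \<in> edom h \<Longrightarrow> h x = ereal (hr h x)"
  unfolding proper_fun_def edom_def by (cases "h x") auto

lemma notin_edom: "x \<notin> edom h \<Longrightarrow> h x = \<infinity>"
  unfolding edom_def by auto

lemma subdiff_real:
  fixes h :: "'a::real_inner \<Rightarrow> ereal"
  assumes "proper_fun h"
  shows "u \<in> subdiff h x \<longleftrightarrow> x \<in> edom h \<and> (\<forall>y\<in>edom h. hr h x + u \<bullet> (y - x) \<le> hr h y)"
proof
  assume u: "u \<in> subdiff h x"
  then have x: "x \<in> edom h" by (auto simp: subdiff_def edom_def)
  show "x \<in> edom h \<and> (\<forall>y\<in>edom h. hr h x + u \<bullet> (y - x) \<le> hr h y)"
  proof (intro conjI ballI x)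
    fix y assume y: "y \<in> edom h"
    from u have "h x + ereal (u \<bullet> (y - x)) \<le> h y" by (auto simp: subdiff_def)
    then show "hr h x + u \<bullet> (y - x) \<le> hr h y"
      using proper_fin[OF assms x] proper_fin[OF assms y] by (metis ereal_less_eq(3) plus_ereal.simps(1))
  qed
next
  assume r: "x \<in> edom h \<and> (\<forall>y\<in>edom h. hr h x + u \<bullet> (y - x) \<le> hr h y)"
  show "u \<in> subdiff h x" unfolding subdiff_def
  proof (safe)
    show "h x < \<infinity>" using r by (auto simp: edom_def)
    fix y show "h x + ereal (u \<bullet> (y - x)) \<le> h y"
    proof (cases "y \<in> edom h")
      case True
      then show ?thesis using r proper_fin[OF assms True] proper_fin[OF assms, of x]
        by (metis ereal_less_eq(3) plus_ereal.simps(1))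
    next
      case False then show ?thesis by (simp add: notin_edom)
    qed
  qed
qed

lemma convex_real:
  fixes h :: "'a::real_vector \<Rightarrow> ereal"
  assumes p: "proper_fun h" and c: "convex_fun h" and x: "x \<in> edom h" and y: "y \<in> edom h"
    and t: "0 \<le> t" "t \<le> 1"
  shows "(1 - t) *\<^sub>R x + t *\<^sub>R y \<in> edom h \<and>
    hr h ((1 - t) *\<^sub>R x + t *\<^sub>R y) \<le> (1 - t) * hr h x + t * hr h y"
proof -
  have le: "h ((1 - t) *\<^sub>R x + t *\<^sub>R y) \<le> ereal (1 - t) * h x + ereal t * h y"
    using c t unfolding convex_fun_def by blast
  also have "\<dots> = ereal ((1 - t) * hr h x + t * hr h y)"
    using proper_fin[OF p x] proper_fin[OF p y] by (metis times_ereal.simps(1) plus_ereal.simps(1))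
  finally have le2: "h ((1 - t) *\<^sub>R x + t *\<^sub>R y) \<le> ereal ((1 - t) * hr h x + t * hr h y)" .
  then have d: "(1 - t) *\<^sub>R x + t *\<^sub>R y \<in> edom h" unfolding edom_def
    using le_less_trans[OF le2, of \<infinity>] by simp
  show ?thesis using d le2 proper_fin[OF p d] by (metis ereal_less_eq(3))
qed

lemma convex_edom:
  fixes h :: "'a::real_vector \<Rightarrow> ereal"
  assumes p: "proper_fun h" and c: "convex_fun h"
  shows "convex (edom h)"
  unfolding convex_alt using convex_real[OF p c] by blast



lemma nd2: "norm (a - b)^2 = norm a^2 + norm b^2 - 2 * (a \<bullet> (b::'a::real_inner))"
  by (simp add: power2_norm_eq_inner inner_diff inner_commute algebra_simps)

lemma phi_fin: "proper_fun h \<Longrightarrow> z \<in> edom h \<Longrightarrow>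
  ereal c + ereal \<gamma> * h z = ereal (c + \<gamma> * hr h z)"
  by (subst proper_fin[of h z]) auto

lemma phi_inf: "z \<notin> edom h \<Longrightarrow> \<gamma> > 0 \<Longrightarrow> ereal c + ereal \<gamma> * h z = \<infinity>"
  by (simp add: notin_edom)

lemma prox_eq:
  fixes h :: "'a::real_inner \<Rightarrow> ereal"
  assumes p: "proper_fun h" and g: "\<gamma> > 0" and u: "(1/\<gamma>) *\<^sub>R (x - q) \<in> subdiff h q"
  shows "prox \<gamma> h x = q"
proof -
  have q: "q \<in> edom h" and sg: "\<And>w. w \<in> edom h \<Longrightarrow> hr h q + ((1/\<gamma>) *\<^sub>R (x - q)) \<bullet> (w - q) \<le> hr h w"
    using u subdiff_real[OF p] by auto
  have key: "(1/2) * (norm (q - x))\<^sup>2 + \<gamma> * hr h q + (1/2) * (norm (w - q))\<^sup>2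
     \<le> (1/2) * (norm (w - x))\<^sup>2 + \<gamma> * hr h w" if w: "w \<in> edom h" for w
  proof -
    have "\<gamma> * (hr h q + ((1/\<gamma>) *\<^sub>R (x - q)) \<bullet> (w - q)) \<le> \<gamma> * hr h w"
      using sg[OF w] g by simp
    then have a: "\<gamma> * hr h q + (x - q) \<bullet> (w - q) \<le> \<gamma> * hr h w"
      using g by (simp add: algebra_simps)
    have b: "norm (w - x)^2 = norm (w - q)^2 + norm (x - q)^2 - 2 * ((w - q) \<bullet> (x - q))"
      using nd2[of "w - q" "x - q"] by (simp add: algebra_simps)
    have c: "norm (q - x) = norm (x - q)" by (simp add: norm_minus_commute)
    show ?thesis using a b c by (simp add: inner_commute algebra_simps)
  qed
  let ?P = "\<lambda>z. \<forall>w. ereal ((1/2) * (norm (z - x))\<^sup>2) + ereal \<gamma> * h z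
                         \<le> ereal ((1/2) * (norm (w - x))\<^sup>2) + ereal \<gamma> * h w"
  have Pq: "?P q"
  proof
    fix w show "ereal ((1/2) * (norm (q - x))\<^sup>2) + ereal \<gamma> * h q
                         \<le> ereal ((1/2) * (norm (w - x))\<^sup>2) + ereal \<gamma> * h w"
    proof (cases "w \<in> edom h")
      case True
      have "(1/2) * (norm (q - x))\<^sup>2 + \<gamma> * hr h q \<le> (1/2) * (norm (w - x))\<^sup>2 + \<gamma> * hr h w"
        using key[OF True] zero_le_power2[of "norm (w - q)"] by linarith
      then show ?thesis unfolding phi_fin[OF p q] phi_fin[OF p True] by simp
    next
      case False
      then show ?thesis by (subst phi_inf[OF False g]) simp
    qed
  qed
  have uniq: "z = q" if Pz: "?P z" for z
  proof -
    have "ereal ((1/2) * (norm (z - x))\<^sup>2) + ereal \<gamma> * h z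
                         \<le> ereal ((1/2) * (norm (q - x))\<^sup>2) + ereal \<gamma> * h q" using Pz by blast
    then have le: "ereal ((1/2) * (norm (z - x))\<^sup>2) + ereal \<gamma> * h z
                   \<le> ereal ((1/2) * (norm (q - x))\<^sup>2 + \<gamma> * hr h q)" using phi_fin[OF p q] by simp
    then have z: "z \<in> edom h" using phi_inf[of z h \<gamma>] g by force
    have "(1/2) * (norm (z - x))\<^sup>2 + \<gamma> * hr h z \<le> (1/2) * (norm (q - x))\<^sup>2 + \<gamma> * hr h q"
      using le phi_fin[OF p z] by simp
    then have "(norm (z - q))\<^sup>2 \<le> 0" using key[OF z] by linarith
    then show ?thesis by simp
  qed
  show ?thesis unfolding prox_def using Pq uniq by (rule the_equality)
qed



lemma GL:
  fixes S :: "('a::euclidean_space \<times> real) set"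
  assumes cs: "convex S" and mem: "(d0, m) \<in> S"
    and minim: "\<And>d r. (d, r) \<in> S \<Longrightarrow> d = d0 \<Longrightarrow> m \<le> r"
    and up: "\<And>d r r'. (d, r) \<in> S \<Longrightarrow> r \<le> r' \<Longrightarrow> (d, r') \<in> S"
    and Q: "\<And>a. (\<forall>(d, r)\<in>S. 0 \<le> a \<bullet> (d - d0)) \<Longrightarrow> (\<forall>(d, r)\<in>S. a \<bullet> (d - d0) = 0)"
  shows "\<exists>u. \<forall>(d, r)\<in>S. m + u \<bullet> (d - d0) \<le> r"
proof -
  have notri: "(d0, m) \<notin> rel_interior S"
  proof
    assume "(d0, m) \<in> rel_interior S"
    then obtain e where e: "e > 0" "cball (d0, m) e \<inter> affine hull S \<subseteq> S"
      using mem_rel_interior_cball by blast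
    have m2: "(d0, m + e/2) \<in> S" using up[OF mem] e by simp
    have eq: "(d0, m - e/2) = 2 *\<^sub>R (d0, m) + (-1) *\<^sub>R (d0, m + e/2)"
      by (simp add: algebra_simps scaleR_2)
    have "(d0, m - e/2) \<in> affine hull S"
      unfolding eq
      by (rule mem_affine[OF affine_affine_hull hull_inc[OF mem] hull_inc[OF m2]]) simp
    moreover have "(d0, m - e/2) \<in> cball (d0, m) e"
      using e by (simp add: dist_Pair_Pair)
    ultimately have "(d0, m - e/2) \<in> S" using e by blast
    then have "m \<le> m - e/2" using minim by blast
    then show False using e by simp
  qed
  obtain a where a0: "a \<noteq> 0" and a1: "\<And>y. y \<in> S \<Longrightarrow> a \<bullet> (d0, m) \<le> a \<bullet> y"
    and a2: "\<And>y. y \<in> rel_interior S \<Longrightarrow> a \<bullet> (d0, m) < a \<bullet> y"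
    using supporting_hyperplane_rel_boundary[OF cs mem notri] by blast
  obtain a' b where ab: "a = (a', b)" by (cases a)
  have ineq: "a' \<bullet> d0 + b * m \<le> a' \<bullet> d + b * r" if "(d, r) \<in> S" for d r
    using a1[OF that] ab by simp
  have b0: "b \<ge> 0"
    using ineq[OF up[OF mem, of "m + 1"]] by (simp add: algebra_simps)
  have bne: "b \<noteq> 0"
  proof
    assume b: "b = 0"
    have "\<forall>(d, r)\<in>S. 0 \<le> a' \<bullet> (d - d0)"
      using ineq b by (auto simp: inner_diff_right)
    then have all0: "\<forall>(d, r)\<in>S. a' \<bullet> (d - d0) = 0" by (rule Q)
    have "rel_interior S \<noteq> {}" using rel_interior_eq_empty[OF cs] mem by auto
    then obtain y where y: "y \<in> rel_interior S" by blast
    obtain d r where dr: "y = (d, r)" by (cases y)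
    have yS: "(d, r) \<in> S" using y dr rel_interior_subset by blast
    have "a' \<bullet> d0 < a' \<bullet> d" using a2[OF y] ab dr b by simp
    moreover have "a' \<bullet> (d - d0) = 0" using all0 yS by blast
    ultimately show False by (simp add: inner_diff_right)
  qed
  then have bp: "b > 0" using b0 by simp
  show ?thesis
  proof (intro exI ballI)
    fix y assume y: "y \<in> S"
    obtain d r where dr: "y = (d, r)" by (cases y)
    have i: "a' \<bullet> d0 + b * m \<le> a' \<bullet> d + b * r" using ineq y dr by simp
    have "b * (m + (- (1/b) *\<^sub>R a') \<bullet> (d - d0)) = b * m - a' \<bullet> (d - d0)"
      using bp by (simp add: algebra_simps)
    also have "\<dots> \<le> b * r" using i by (simp add: inner_diff_right algebra_simps)
    finally have "m + (- (1/b) *\<^sub>R a') \<bullet> (d - d0) \<le> r" using bp by (simp only: mult_le_cancel_left_pos)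
    then show "case y of (d, r) \<Rightarrow> m + (- (1/b) *\<^sub>R a') \<bullet> (d - d0) \<le> r" using dr by simp
  qed
qed

lemma ri_shrink:
  fixes A :: "'a::euclidean_space set"
  assumes c: "c \<in> rel_interior A" and d: "d \<in> A"
  shows "\<exists>t>0. c - t *\<^sub>R (d - c) \<in> A"
proof -
  obtain e where e: "e > 0" "cball c e \<inter> affine hull A \<subseteq> A"
    using c mem_rel_interior_cball by blast
  have cA: "c \<in> A" using c rel_interior_subset by blast
  define t where "t = e / (norm (d - c) + 1)"
  have t: "t > 0" using e norm_ge_zero[of "d - c"] unfolding t_def by (intro divide_pos_pos) linarith+
  have eq: "c - t *\<^sub>R (d - c) = (1 + t) *\<^sub>R c + (- t) *\<^sub>R d" by (simp add: algebra_simps)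
  have "c - t *\<^sub>R (d - c) \<in> affine hull A"
    unfolding eq by (rule mem_affine[OF affine_affine_hull hull_inc[OF cA] hull_inc[OF d]]) simp
  moreover have "t * norm (d - c) \<le> e"
  proof -
    have "t * norm (d - c) \<le> t * (norm (d - c) + 1)" using t by simp
    also have "\<dots> = e"
    proof -
      have pos: "norm (d - c) + 1 \<noteq> 0" using norm_ge_zero[of "d - c"] by linarith
      show ?thesis unfolding t_def using pos by simp
    qed
    finally show ?thesis .
  qed
  then have "c - t *\<^sub>R (d - c) \<in> cball c e"
    using t by (simp add: dist_norm)
  ultimately show ?thesis using e t by blast
qed



lemma SG:
  fixes h :: "'a::euclidean_space \<Rightarrow> ereal"
  assumes p: "proper_fun h" and cv: "convex_fun h" and c: "c \<in> rel_interior (edom h)"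
  shows "\<exists>u. u \<in> subdiff h c"
proof -
  define S where "S = {(d, r). d \<in> edom h \<and> hr h d \<le> r}"
  have cE: "c \<in> edom h" using c rel_interior_subset by blast
  have cs: "convex S"
  proof (rule convexI)
    fix x y :: "'a \<times> real" and u v :: real
    assume x: "x \<in> S" and y: "y \<in> S" and uv0: "0 \<le> u" "0 \<le> v" "u + v = 1"
    then have uv: "0 \<le> u \<and> 0 \<le> v \<and> u + v = 1" by simp
    obtain d1 r1 d2 r2 where xy: "x = (d1, r1)" "y = (d2, r2)" by (cases x, cases y)
    have d: "d1 \<in> edom h" "d2 \<in> edom h" "hr h d1 \<le> r1" "hr h d2 \<le> r2"
      using x y xy by (auto simp: S_def)
    have u: "u = 1 - v" using uv by simp
    have cr: "(1 - v) *\<^sub>R d1 + v *\<^sub>R d2 \<in> edom h \<and>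
      hr h ((1 - v) *\<^sub>R d1 + v *\<^sub>R d2) \<le> (1 - v) * hr h d1 + v * hr h d2"
      using convex_real[OF p cv d(1) d(2), of v] uv by simp
    have "(1 - v) * hr h d1 + v * hr h d2 \<le> (1 - v) * r1 + v * r2"
      using d uv by (intro add_mono mult_left_mono) auto
    then show "u *\<^sub>R x + v *\<^sub>R y \<in> S" using cr xy u by (auto simp: S_def)
  qed
  have "\<exists>u. \<forall>(d, r)\<in>S. hr h c + u \<bullet> (d - c) \<le> r"
  proof (rule GL[OF cs])
    show "(c, hr h c) \<in> S" using cE by (simp add: S_def)
    show "\<And>d r. (d, r) \<in> S \<Longrightarrow> d = c \<Longrightarrow> hr h c \<le> r" by (auto simp: S_def)
    show "\<And>d r r'. (d, r) \<in> S \<Longrightarrow> r \<le> r' \<Longrightarrow> (d, r') \<in> S" by (auto simp: S_def)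
    fix a assume A: "\<forall>(d, r)\<in>S. 0 \<le> a \<bullet> (d - c)"
    show "\<forall>(d, r)\<in>S. a \<bullet> (d - c) = 0"
    proof (clarify)
      fix d r assume "(d, r) \<in> S"
      then have dE: "d \<in> edom h" "0 \<le> a \<bullet> (d - c)" using A by (auto simp: S_def)
      obtain t where t: "t > 0" "c - t *\<^sub>R (d - c) \<in> edom h" using ri_shrink[OF c dE(1)] by blast
      have "(c - t *\<^sub>R (d - c), hr h (c - t *\<^sub>R (d - c))) \<in> S" using t by (simp add: S_def)
      then have "0 \<le> a \<bullet> (c - t *\<^sub>R (d - c) - c)" using A by blast
      then have "0 \<le> - t * (a \<bullet> (d - c))" by (simp add: inner_diff_right)
      then have "a \<bullet> (d - c) \<le> 0" using t(1) by (simp add: mult_le_0_iff)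
      then show "a \<bullet> (d - c) = 0" using dE(2) by simp
    qed
  qed
  then obtain u where u: "\<forall>(d, r)\<in>S. hr h c + u \<bullet> (d - c) \<le> r" by blast
  have "u \<in> subdiff h c" unfolding subdiff_real[OF p]
  proof (intro conjI ballI cE)
    fix y assume "y \<in> edom h"
    then have "(y, hr h y) \<in> S" by (simp add: S_def)
    then show "hr h c + u \<bullet> (y - c) \<le> hr h y" using u by blast
  qed
  then show ?thesis by blast
qed

lemma sum_fin:
  assumes "proper_fun f" "proper_fun g" "x \<in> edom f" "x \<in> edom g"
  shows "f x + g x = ereal (hr f x + hr g x)"
  using assms by (cases "f x"; cases "g x") (auto simp: proper_fun_def edom_def)

lemma in_edom_of_argmin:
  assumes pf: "proper_fun f" and pg: "proper_fun g" and c: "c \<in> edom f" "c \<in> edom g"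
    and xs: "xs \<in> Argmin (\<lambda>y. f y + g y)"
  shows "xs \<in> edom f \<and> xs \<in> edom g"
proof -
  have le: "f xs + g xs \<le> f c + g c" using xs by (simp add: Argmin_def)
  have "f c + g c < \<infinity>" using sum_fin[OF pf pg c] by simp
  then have "f xs + g xs < \<infinity>" using le by (rule le_less_trans[rotated])
  then show ?thesis using pf pg unfolding proper_fun_def edom_def
    by (cases "f xs"; cases "g xs") auto
qed

lemma SR:
  fixes f g :: "'a::euclidean_space \<Rightarrow> ereal"
  assumes pf: "proper_fun f" and cf: "convex_fun f" and pg: "proper_fun g" and cg: "convex_fun g"
    and cf': "c \<in> rel_interior (edom f)" and cg': "c \<in> rel_interior (edom g)"
    and xs: "xs \<in> Argmin (\<lambda>y. f y + g y)"
  shows "\<exists>u. u \<in> subdiff g xs \<and> - u \<in> subdiff f xs"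
proof -
  have cEf: "c \<in> edom f" using cf' rel_interior_subset by blast
  have cEg: "c \<in> edom g" using cg' rel_interior_subset by blast
  have xE: "xs \<in> edom f" "xs \<in> edom g" using in_edom_of_argmin[OF pf pg cEf cEg xs] by auto
  define S where "S = {p. \<exists>w y r. p = (w - y, r) \<and> y \<in> edom f \<and> w \<in> edom g \<and> hr f y + hr g w \<le> r}"
  have memS: "(w - y, r) \<in> S" if "y \<in> edom f" "w \<in> edom g" "hr f y + hr g w \<le> r" for w y r
    using that unfolding S_def by blast
  have memS_inv: "\<exists>w y. d = w - y \<and> y \<in> edom f \<and> w \<in> edom g \<and> hr f y + hr g w \<le> r"
    if "(d, r) \<in> S" for d r using that unfolding S_def by auto
  have cs: "convex S"
  proof (rule convexI)
    fix x z :: "'a \<times> real" and u v :: real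
    assume x: "x \<in> S" and z: "z \<in> S" and uv0: "0 \<le> u" "0 \<le> v" "u + v = 1"
    then have uv: "0 \<le> u \<and> 0 \<le> v \<and> u + v = 1" by simp
    obtain w1 y1 r1 where 1: "x = (w1 - y1, r1)" "y1 \<in> edom f" "w1 \<in> edom g" "hr f y1 + hr g w1 \<le> r1"
      using x unfolding S_def by blast
    obtain w2 y2 r2 where 2: "z = (w2 - y2, r2)" "y2 \<in> edom f" "w2 \<in> edom g" "hr f y2 + hr g w2 \<le> r2"
      using z unfolding S_def by blast
    have u: "u = 1 - v" using uv by simp
    have cy: "(1 - v) *\<^sub>R y1 + v *\<^sub>R y2 \<in> edom f \<and>
      hr f ((1 - v) *\<^sub>R y1 + v *\<^sub>R y2) \<le> (1 - v) * hr f y1 + v * hr f y2"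
      using convex_real[OF pf cf 1(2) 2(2), of v] uv by simp
    have cw: "(1 - v) *\<^sub>R w1 + v *\<^sub>R w2 \<in> edom g \<and>
      hr g ((1 - v) *\<^sub>R w1 + v *\<^sub>R w2) \<le> (1 - v) * hr g w1 + v * hr g w2"
      using convex_real[OF pg cg 1(3) 2(3), of v] uv by simp
    have "(1 - v) * (hr f y1 + hr g w1) + v * (hr f y2 + hr g w2) \<le> (1 - v) * r1 + v * r2"
      using 1 2 uv by (intro add_mono mult_left_mono) auto
    moreover have "(1 - v) * (hr f y1 + hr g w1) + v * (hr f y2 + hr g w2) =
        ((1 - v) * hr f y1 + v * hr f y2) + ((1 - v) * hr g w1 + v * hr g w2)"
      by (simp add: distrib_left)
    ultimately have r: "hr f ((1 - v) *\<^sub>R y1 + v *\<^sub>R y2) + hr g ((1 - v) *\<^sub>R w1 + v *\<^sub>R w2) \<le> (1 - v) * r1 + v * r2"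
      using cy cw by linarith
    have eq1: "(1 - v) *\<^sub>R (w1 - y1) + v *\<^sub>R (w2 - y2) = ((1 - v) *\<^sub>R w1 + v *\<^sub>R w2) - ((1 - v) *\<^sub>R y1 + v *\<^sub>R y2)"
      by (simp add: scaleR_diff_right)
    have eq: "u *\<^sub>R x + v *\<^sub>R z = (((1 - v) *\<^sub>R w1 + v *\<^sub>R w2) - ((1 - v) *\<^sub>R y1 + v *\<^sub>R y2), (1 - v) * r1 + v * r2)"
      unfolding 1(1) 2(1) u using eq1 by simp
    show "u *\<^sub>R x + v *\<^sub>R z \<in> S" unfolding eq using cy cw r by (intro memS) auto
  qed
  define m where "m = hr f xs + hr g xs"
  have "\<exists>u. \<forall>(d, r)\<in>S. m + u \<bullet> (d - 0) \<le> r"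
  proof (rule GL[OF cs])
    show "(0, m) \<in> S" using memS[OF xE(1) xE(2), of m] by (simp add: m_def)
    show "\<And>d r. (d, r) \<in> S \<Longrightarrow> d = 0 \<Longrightarrow> m \<le> r"
    proof -
      fix d r assume "(d, r) \<in> S" "d = 0"
      then obtain w y where wy: "0 = w - y" "y \<in> edom f" "w \<in> edom g" "hr f y + hr g w \<le> r"
        using memS_inv by blast
      have "w = y" using wy(1) by simp
      have "f xs + g xs \<le> f y + g y" using xs by (simp add: Argmin_def)
      then have "ereal m \<le> ereal (hr f y + hr g y)" unfolding m_def
        using sum_fin[OF pf pg xE] sum_fin[OF pf pg wy(2)] wy(3) \<open>w = y\<close> by simp
      then show "m \<le> r" using wy(4) \<open>w = y\<close> by simp
    qed
    show "\<And>d r r'. (d, r) \<in> S \<Longrightarrow> r \<le> r' \<Longrightarrow> (d, r') \<in> S"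
    proof -
      fix d r r' assume "(d, r) \<in> S" "r \<le> r'"
      then obtain w y where "d = w - y" "y \<in> edom f" "w \<in> edom g" "hr f y + hr g w \<le> r"
        using memS_inv by blast
      then show "(d, r') \<in> S" using memS \<open>r \<le> r'\<close> by force
    qed
    fix a assume A: "\<forall>(d, r)\<in>S. 0 \<le> a \<bullet> (d - 0)"
    have A': "0 \<le> a \<bullet> (w - y)" if "y \<in> edom f" "w \<in> edom g" for w y
      using A memS[OF that order_refl] by auto
    have W: "a \<bullet> (w - c) = 0" if w: "w \<in> edom g" for w
    proof -
      obtain t where t: "t > 0" "c - t *\<^sub>R (w - c) \<in> edom g" using ri_shrink[OF cg' w] by blast
      have "0 \<le> a \<bullet> (c - t *\<^sub>R (w - c) - c)" using A'[OF cEf t(2)] .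
      then have "0 \<le> - t * (a \<bullet> (w - c))" by (simp add: inner_diff_right)
      then have "a \<bullet> (w - c) \<le> 0" using t(1) by (simp add: mult_le_0_iff)
      then show ?thesis using A'[OF cEf w] by simp
    qed
    have Y: "a \<bullet> (y - c) = 0" if y: "y \<in> edom f" for y
    proof -
      obtain t where t: "t > 0" "c - t *\<^sub>R (y - c) \<in> edom f" using ri_shrink[OF cf' y] by blast
      have "0 \<le> a \<bullet> (c - (c - t *\<^sub>R (y - c)))" using A'[OF t(2) cEg] .
      then have "0 \<le> t * (a \<bullet> (y - c))" by (simp add: inner_diff_right)
      then have "0 \<le> a \<bullet> (y - c)" using t(1) by (simp add: zero_le_mult_iff)
      moreover have "0 \<le> a \<bullet> (c - y)" using A'[OF y cEg] .
      ultimately show ?thesis by (simp add: inner_diff_right)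
    qed
    show "\<forall>(d, r)\<in>S. a \<bullet> (d - 0) = 0"
    proof clarify
      fix d r assume "(d, r) \<in> S"
      then obtain w y where wy: "d = w - y" "y \<in> edom f" "w \<in> edom g" using memS_inv by blast
      have "a \<bullet> (w - y) = a \<bullet> (w - c) - a \<bullet> (y - c)" by (simp add: inner_diff_right)
      then show "a \<bullet> (d - 0) = 0" using W[OF wy(3)] Y[OF wy(2)] wy(1) by simp
    qed
  qed
  then obtain u where u: "\<forall>(d, r)\<in>S. m + u \<bullet> (d - 0) \<le> r" by blast
  have U: "m + u \<bullet> (w - y) \<le> hr f y + hr g w" if "y \<in> edom f" "w \<in> edom g" for w y
    using u memS[OF that order_refl] by auto
  have "u \<in> subdiff g xs" unfolding subdiff_real[OF pg]
  proof (intro conjI ballI xE)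
    fix w assume "w \<in> edom g"
    then show "hr g xs + u \<bullet> (w - xs) \<le> hr g w" using U[OF xE(1)] by (simp add: m_def)
  qed
  moreover have "- u \<in> subdiff f xs" unfolding subdiff_real[OF pf]
  proof (intro conjI ballI xE)
    fix y assume "y \<in> edom f"
    then have "m + u \<bullet> (xs - y) \<le> hr f y + hr g xs" using U[OF _ xE(2)] by blast
    then show "hr f xs + (- u) \<bullet> (y - xs) \<le> hr f y" by (simp add: m_def inner_diff_right)
  qed
  ultimately show ?thesis by (intro exI[of _ u] conjI)
qed



lemma norm_add_sq: "(norm (a + b))\<^sup>2 = (norm a)\<^sup>2 + (norm b)\<^sup>2 + 2 * (a \<bullet> (b::'a::real_inner))"
  by (simp add: power2_norm_eq_inner inner_add_left inner_add_right inner_commute)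

lemma norm_scale_sq: "(norm (t *\<^sub>R (b::'a::real_normed_vector)))\<^sup>2 = t\<^sup>2 * (norm b)\<^sup>2"
  by (simp add: power_mult_distrib)

lemma eps_le:
  fixes a b c :: real
  assumes H: "\<And>t. 0 < t \<Longrightarrow> t \<le> 1 \<Longrightarrow> a \<le> b + t * c"
  shows "a \<le> b"
proof (rule ccontr)
  assume ab: "\<not> a \<le> b"
  show False
  proof (cases "c \<le> 0")
    case True
    then show False using H[of 1] ab by simp
  next
    case False
    define t where "t = min 1 ((a - b) / (2 * c))"
    have t: "0 < t" "t \<le> 1" using ab False by (auto simp: t_def)
    have "t * c \<le> ((a - b) / (2 * c)) * c" using False by (intro mult_right_mono) (auto simp: t_def)
    also have "\<dots> = (a - b) / 2" using False by simp
    finally show False using H[OF t] ab by simp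
  qed
qed

lemma min_subgrad:
  fixes h :: "'a::real_inner \<Rightarrow> ereal"
  assumes p: "proper_fun h" and cv: "convex_fun h" and g: "\<gamma> > 0"
    and P: "\<forall>w. ereal ((1/2) * (norm (q - x))\<^sup>2) + ereal \<gamma> * h q
                \<le> ereal ((1/2) * (norm (w - x))\<^sup>2) + ereal \<gamma> * h w"
  shows "(1/\<gamma>) *\<^sub>R (x - q) \<in> subdiff h q"
proof -
  obtain w0 where w0: "w0 \<in> edom h" using p unfolding proper_fun_def edom_def by blast
  have qE: "q \<in> edom h"
  proof (rule ccontr)
    assume "q \<notin> edom h"
    then have inf: "ereal ((1/2) * (norm (q - x))\<^sup>2) + ereal \<gamma> * h q = \<infinity>" by (rule phi_inf[OF _ g])
    have "\<infinity> \<le> ereal ((1/2) * (norm (w0 - x))\<^sup>2 + \<gamma> * hr h w0)"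
      using P[rule_format, of w0] unfolding phi_fin[OF p w0] inf .
    then show False by simp
  qed
  have psi: "(1/2) * (norm (q - x))\<^sup>2 + \<gamma> * hr h q \<le> (1/2) * (norm (w - x))\<^sup>2 + \<gamma> * hr h w"
    if w: "w \<in> edom h" for w
    using P[rule_format, of w] unfolding phi_fin[OF p qE] phi_fin[OF p w] by simp
  show ?thesis unfolding subdiff_real[OF p]
  proof (intro conjI ballI qE)
    fix y assume y: "y \<in> edom h"
    define A where "A = (norm (q - x))\<^sup>2"
    define B where "B = (norm (y - q))\<^sup>2"
    define C where "C = (q - x) \<bullet> (y - q)"
    have main: "\<gamma> * hr h q \<le> C + \<gamma> * hr h y + t * (B / 2)" if t: "0 < t" "t \<le> 1" for t
    proof -
      define yt where "yt = (1 - t) *\<^sub>R q + t *\<^sub>R y"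
      have cr: "yt \<in> edom h" "hr h yt \<le> (1 - t) * hr h q + t * hr h y"
        using convex_real[OF p cv qE y, of t] t by (auto simp: yt_def)
      have e: "yt - x = (q - x) + t *\<^sub>R (y - q)" by (simp add: yt_def algebra_simps)
      have n: "(norm (yt - x))\<^sup>2 = A + t^2 * B + 2 * (t * C)"
        unfolding e A_def B_def C_def norm_add_sq norm_scale_sq by simp
      have s: "(1/2) * A + \<gamma> * hr h q \<le> (1/2) * (norm (yt - x))\<^sup>2 + \<gamma> * hr h yt"
        using psi[OF cr(1)] by (simp add: A_def)
      have gq: "\<gamma> * hr h yt \<le> \<gamma> * ((1 - t) * hr h q + t * hr h y)"
        using cr(2) g by (intro mult_left_mono) auto
      have ex: "\<gamma> * ((1 - t) * hr h q + t * hr h y) = \<gamma> * hr h q - t * (\<gamma> * hr h q) + t * (\<gamma> * hr h y)"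
        by (simp add: algebra_simps)
      have s2: "(1/2) * A + \<gamma> * hr h q \<le> (1/2) * (A + t^2 * B + 2 * (t * C)) + \<gamma> * hr h yt"
        using s n by simp
      have rhs: "t * (C + \<gamma> * hr h y + t * (B / 2)) = t * C + t * (\<gamma> * hr h y) + (1/2) * (t^2 * B)"
        by (simp add: algebra_simps power2_eq_square)
      have "t * (\<gamma> * hr h q) \<le> t * (C + \<gamma> * hr h y + t * (B / 2))"
      proof -
        have gq2: "\<gamma> * hr h yt \<le> \<gamma> * hr h q - t * (\<gamma> * hr h q) + t * (\<gamma> * hr h y)"
          using gq unfolding ex .
        show ?thesis unfolding rhs using s2 gq2 by argo
      qed
      then show ?thesis using t by simp
    qed
    have "\<gamma> * hr h q \<le> C + \<gamma> * hr h y" by (rule eps_le[OF main])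
    then have "\<gamma> * (hr h q + ((1/\<gamma>) *\<^sub>R (x - q)) \<bullet> (y - q)) \<le> \<gamma> * hr h y"
      using g by (simp add: C_def algebra_simps inner_diff_left)
    then show "hr h q + ((1/\<gamma>) *\<^sub>R (x - q)) \<bullet> (y - q) \<le> hr h y" using g by simp
  qed
qed



lemma quad_bound:
  fixes s k K M :: real
  assumes s: "0 \<le> s" and k: "0 \<le> k" and H: "(1/2) * s\<^sup>2 - k * s + K \<le> M"
  shows "s \<le> 2 * k + 2 * \<bar>M - K\<bar> + 1"
proof (rule ccontr)
  define D where "D = \<bar>M - K\<bar>"
  assume "\<not> ?thesis"
  then have big: "s > 2 * k + 2 * D + 1" by (simp add: D_def)
  have D0: "D \<ge> 0" by (simp add: D_def)
  have s1: "s \<ge> 1" using big k D0 by linarith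
  have "s * s \<ge> s * (2 * k + 2 * D + 1)" using big s by (intro mult_left_mono) auto
  moreover have "D * s \<ge> D * 1" using s1 D0 by (intro mult_left_mono) auto
  moreover have "s * (2 * k + 2 * D + 1) = 2 * (k * s) + 2 * (D * s) + s" by (simp add: algebra_simps)
  moreover have "M - K \<le> D" by (simp add: D_def)
  ultimately show False using H s1 by (simp add: power2_eq_square)
qed

lemma hr_le: "proper_fun h \<Longrightarrow> x \<in> edom h \<Longrightarrow> (h x \<le> ereal c) = (hr h x \<le> c)"
  by (cases "h x") (auto simp: proper_fun_def edom_def)

lemma min_exists:
  fixes h :: "'a::euclidean_space \<Rightarrow> ereal"
  assumes plc: "proper_lsc_convex h" and g: "\<gamma> > 0"
  shows "\<exists>q. \<forall>w. ereal ((1/2) * (norm (q - x))\<^sup>2) + ereal \<gamma> * h q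
                \<le> ereal ((1/2) * (norm (w - x))\<^sup>2) + ereal \<gamma> * h w"
proof -
  have p: "proper_fun h" and l: "lsc_fun h" and cv: "convex_fun h"
    using plc by (auto simp: proper_lsc_convex_def)
  have ne: "edom h \<noteq> {}" using p unfolding proper_fun_def edom_def by blast
  have "rel_interior (edom h) \<noteq> {}" using rel_interior_eq_empty[OF convex_edom[OF p cv]] ne by simp
  then obtain c where c: "c \<in> rel_interior (edom h)" by blast
  obtain u where u: "u \<in> subdiff h c" using SG[OF p cv c] by blast
  have cE: "c \<in> edom h" and lb: "\<And>z. z \<in> edom h \<Longrightarrow> hr h c + u \<bullet> (z - c) \<le> hr h z"
    using u subdiff_real[OF p] by auto
  define psi where "psi z = (1/2) * (norm (z - x))\<^sup>2 + \<gamma> * hr h z" for z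
  define k where "k = \<gamma> * norm u"
  define K1 where "K1 = \<gamma> * hr h c - k * norm (x - c)"
  have k0: "k \<ge> 0" using g by (simp add: k_def)
  have lower: "(1/2) * (norm (z - x))\<^sup>2 - k * norm (z - x) + K1 \<le> psi z" if z: "z \<in> edom h" for z
  proof -
    have cs: "u \<bullet> (c - z) \<le> norm u * norm (c - z)" by (rule norm_cauchy_schwarz)
    have tri: "norm (c - z) \<le> norm (z - x) + norm (x - c)"
      using norm_triangle_ineq[of "x - z" "c - x"] by (simp add: norm_minus_commute algebra_simps)
    have "norm u * norm (c - z) \<le> norm u * (norm (z - x) + norm (x - c))"
      using tri by (intro mult_left_mono) auto
    then have "- (u \<bullet> (z - c)) \<le> norm u * norm (z - x) + norm u * norm (x - c)"
      using cs by (simp add: inner_diff_right algebra_simps)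
    then have "\<gamma> * (- (u \<bullet> (z - c))) \<le> \<gamma> * (norm u * norm (z - x) + norm u * norm (x - c))"
      using g by (intro mult_left_mono) auto
    moreover have "\<gamma> * (hr h c + u \<bullet> (z - c)) \<le> \<gamma> * hr h z" using lb[OF z] g by simp
    ultimately show ?thesis unfolding psi_def k_def K1_def by (simp add: algebra_simps)
  qed
  define V where "V = psi ` edom h"
  have Vne: "V \<noteq> {}" using ne by (simp add: V_def)
  define K0 where "K0 = K1 - k\<^sup>2 / 2"
  have bnd: "K0 \<le> psi z" if z: "z \<in> edom h" for z
  proof -
    have "0 \<le> (1/2) * (norm (z - x) - k)\<^sup>2" by simp
    then have "K0 \<le> (1/2) * (norm (z - x))\<^sup>2 - k * norm (z - x) + K1"
      by (simp add: K0_def power2_eq_square algebra_simps)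
    then show ?thesis using lower[OF z] by simp
  qed
  have bdd: "bdd_below V" unfolding V_def bdd_below_def using bnd by blast
  define m where "m = Inf V"
  have mle: "m \<le> psi z" if "z \<in> edom h" for z
    unfolding m_def V_def by (rule cInf_lower) (use that bdd V_def in auto)
  have "\<forall>n. \<exists>z. z \<in> edom h \<and> psi z < m + inverse (real (Suc n))"
  proof
    fix n
    have "Inf V < m + inverse (real (Suc n))" by (simp add: m_def)
    then obtain v where "v \<in> V" "v < m + inverse (real (Suc n))" using cInf_lessD[OF Vne] by blast
    then show "\<exists>z. z \<in> edom h \<and> psi z < m + inverse (real (Suc n))" by (auto simp: V_def)
  qed
  then obtain zs where zs: "\<And>n. zs n \<in> edom h" "\<And>n. psi (zs n) < m + inverse (real (Suc n))"
    by metis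
  define B where "B = 2 * k + 2 * \<bar>m + 1 - K1\<bar> + 1"
  have zb: "norm (zs n - x) \<le> B" for n
  proof -
    have "inverse (real (Suc n)) \<le> 1" using inverse_le_1_iff[of "real (Suc n)"] by simp
    then have "(1/2) * (norm (zs n - x))\<^sup>2 - k * norm (zs n - x) + K1 \<le> m + 1"
      using lower[OF zs(1)] zs(2)[of n] by (meson add_left_mono dual_order.trans less_imp_le)
    then show ?thesis unfolding B_def by (rule quad_bound[OF norm_ge_zero k0])
  qed
  have "bounded (range zs)" unfolding bounded_iff
  proof (intro exI ballI)
    fix z assume "z \<in> range zs"
    then obtain n where "z = zs n" by blast
    then show "norm z \<le> B + norm x" using zb[of n] norm_triangle_ineq[of "zs n - x" x] by simp
  qed
  then obtain q r where r: "strict_mono r" and lim: "(zs \<circ> r) \<longlonglongrightarrow> q"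
    using bounded_imp_convergent_subsequence by blast
  define zeta where "zeta = zs \<circ> r"
  have zE: "zeta n \<in> edom h" for n using zs(1) by (simp add: zeta_def)
  have psilim: "(\<lambda>n. psi (zeta n)) \<longlonglongrightarrow> m"
  proof (rule tendsto_sandwich[where f = "\<lambda>n. m" and h = "\<lambda>n. m + inverse (real (Suc n))"])
    show "\<forall>\<^sub>F n in sequentially. m \<le> psi (zeta n)" using mle zE by simp
    show "\<forall>\<^sub>F n in sequentially. psi (zeta n) \<le> m + inverse (real (Suc n))"
    proof (rule always_eventually, rule allI)
      fix n
      have "n \<le> r n" using seq_suble[OF r] .
      then have iv: "inverse (real (Suc (r n))) \<le> inverse (real (Suc n))"
        by (simp add: le_imp_inverse_le)
      have "psi (zeta n) < m + inverse (real (Suc (r n)))" using zs(2)[of "r n"] by (simp add: zeta_def)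
      then show "psi (zeta n) \<le> m + inverse (real (Suc n))" using iv by linarith
    qed
    show "(\<lambda>n. m) \<longlonglongrightarrow> m" by simp
    show "(\<lambda>n. m + inverse (real (Suc n))) \<longlonglongrightarrow> m"
      using tendsto_add[OF tendsto_const LIMSEQ_inverse_real_of_nat, of m] by simp
  qed
  define L where "L = (m - (1/2) * (norm (q - x))\<^sup>2) / \<gamma>"
  have hlim: "(\<lambda>n. hr h (zeta n)) \<longlonglongrightarrow> L"
  proof -
    have e: "hr h (zeta n) = (psi (zeta n) - (1/2) * (norm (zeta n - x))\<^sup>2) / \<gamma>" for n
      using g by (simp add: psi_def)
    have zl: "zeta \<longlonglongrightarrow> q" using lim by (simp add: zeta_def)
    show ?thesis unfolding e L_def
      by (intro tendsto_intros psilim zl) (use g in simp)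
  qed
  have hq: "h q \<le> ereal (L + e)" if e: "e > 0" for e
  proof -
    have ev: "\<forall>\<^sub>F n in sequentially. hr h (zeta n) < L + e"
      using order_tendstoD(2)[OF hlim, of "L + e"] e by simp
    have ev2: "\<forall>\<^sub>F n in sequentially. zeta n \<in> {z. h z \<le> ereal (L + e)}"
    proof (rule eventually_mono[OF ev])
      fix n assume "hr h (zeta n) < L + e"
      then show "zeta n \<in> {z. h z \<le> ereal (L + e)}" using hr_le[OF p zE[of n]] by simp
    qed
    have cl: "closed {z. h z \<le> ereal (L + e)}" using l by (simp add: lsc_fun_def)
    have zl: "zeta \<longlonglongrightarrow> q" using lim by (simp add: zeta_def)
    have "q \<in> {z. h z \<le> ereal (L + e)}"
      by (rule Lim_in_closed_set[OF cl ev2 trivial_limit_sequentially zl])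
    then show ?thesis by simp
  qed
  have qE: "q \<in> edom h" unfolding edom_def using le_less_trans[OF hq[of 1], of \<infinity>] by simp
  have "hr h q \<le> L + e" if "e > 0" for e
    using hq[OF that] hr_le[OF p qE] by simp
  then have "hr h q \<le> L" by (rule field_le_epsilon)
  then have "psi q \<le> m" using g unfolding psi_def L_def by (simp add: field_simps)
  then have pq: "psi q \<le> psi w" if "w \<in> edom h" for w using mle[OF that] by simp
  show ?thesis
  proof (intro exI allI)
    fix w
    show "ereal ((1/2) * (norm (q - x))\<^sup>2) + ereal \<gamma> * h q
                \<le> ereal ((1/2) * (norm (w - x))\<^sup>2) + ereal \<gamma> * h w"
    proof (cases "w \<in> edom h")
      case True
      then show ?thesis unfolding phi_fin[OF p qE] phi_fin[OF p True] using pq[OF True] by (simp add: psi_def)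
    next
      case False
      then show ?thesis by (subst phi_inf[OF False g]) simp
    qed
  qed
qed

lemma prox_sub:
  fixes h :: "'a::euclidean_space \<Rightarrow> ereal"
  assumes plc: "proper_lsc_convex h" and g: "\<gamma> > 0"
  shows "(1/\<gamma>) *\<^sub>R (x - prox \<gamma> h x) \<in> subdiff h (prox \<gamma> h x)"
proof -
  have p: "proper_fun h" and cv: "convex_fun h" using plc by (auto simp: proper_lsc_convex_def)
  obtain q where q: "\<forall>w. ereal ((1/2) * (norm (q - x))\<^sup>2) + ereal \<gamma> * h q
                \<le> ereal ((1/2) * (norm (w - x))\<^sup>2) + ereal \<gamma> * h w"
    using min_exists[OF plc g] by blast
  have s: "(1/\<gamma>) *\<^sub>R (x - q) \<in> subdiff h q" by (rule min_subgrad[OF p cv g q])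
  have "prox \<gamma> h x = q" by (rule prox_eq[OF p g s])
  then show ?thesis using s by simp
qed



lemma idn: "((e::'a::real_inner) - d) \<bullet> d = d \<bullet> e - (norm d)\<^sup>2"
  by (simp add: inner_diff_left inner_diff_right inner_commute power2_norm_eq_inner)

lemma prox_fne:
  fixes h :: "'a::euclidean_space \<Rightarrow> ereal"
  assumes plc: "proper_lsc_convex h" and g: "\<gamma> > 0"
  shows "(norm (prox \<gamma> h a - prox \<gamma> h b))\<^sup>2 \<le> (prox \<gamma> h a - prox \<gamma> h b) \<bullet> (a - b)"
proof -
  have p: "proper_fun h" using plc by (simp add: proper_lsc_convex_def)
  define pa where "pa = prox \<gamma> h a"
  define pb where "pb = prox \<gamma> h b"
  define ua where "ua = (1/\<gamma>) *\<^sub>R (a - pa)"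
  define ub where "ub = (1/\<gamma>) *\<^sub>R (b - pb)"
  have sa: "ua \<in> subdiff h pa" using prox_sub[OF plc g, of a] by (simp add: ua_def pa_def)
  have sb: "ub \<in> subdiff h pb" using prox_sub[OF plc g, of b] by (simp add: ub_def pb_def)
  have ea: "pa \<in> edom h" and eb: "pb \<in> edom h" using sa sb subdiff_real[OF p] by auto
  have i1: "hr h pa + ua \<bullet> (pb - pa) \<le> hr h pb" using sa eb subdiff_real[OF p] by blast
  have i2: "hr h pb + ub \<bullet> (pa - pb) \<le> hr h pa" using sb ea subdiff_real[OF p] by blast
  have "0 \<le> (ua - ub) \<bullet> (pa - pb)" using i1 i2 by (simp add: inner_diff_left inner_diff_right)
  then have "0 \<le> \<gamma> * ((ua - ub) \<bullet> (pa - pb))" using g by simp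
  also have "\<gamma> * ((ua - ub) \<bullet> (pa - pb)) = ((a - b) - (pa - pb)) \<bullet> (pa - pb)"
    using g by (simp add: ua_def ub_def inner_diff_left inner_diff_right algebra_simps)
  finally have "0 \<le> ((a - b) - (pa - pb)) \<bullet> (pa - pb)" .
  moreover have "((a - b) - (pa - pb)) \<bullet> (pa - pb) = (pa - pb) \<bullet> (a - b) - (norm (pa - pb))\<^sup>2"
    by (rule idn)
  ultimately show ?thesis unfolding pa_def[symmetric] pb_def[symmetric] by linarith
qed

lemma prox_ne:
  fixes h :: "'a::euclidean_space \<Rightarrow> ereal"
  assumes plc: "proper_lsc_convex h" and g: "\<gamma> > 0"
  shows "norm (prox \<gamma> h a - prox \<gamma> h b) \<le> norm (a - b)"
proof -
  define d where "d = prox \<gamma> h a - prox \<gamma> h b"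
  have "(norm d)\<^sup>2 \<le> d \<bullet> (a - b)" using prox_fne[OF plc g] by (simp add: d_def)
  also have "\<dots> \<le> norm d * norm (a - b)" by (rule norm_cauchy_schwarz)
  finally have "norm d * norm d \<le> norm d * norm (a - b)" by (simp add: power2_eq_square)
  then have "norm d \<le> norm (a - b)"
    by (cases "norm d = 0") (auto simp: mult_le_cancel_left)
  then show ?thesis by (simp add: d_def)
qed

lemma refl_ne:
  fixes h :: "'a::euclidean_space \<Rightarrow> ereal"
  assumes plc: "proper_lsc_convex h" and g: "\<gamma> > 0"
  shows "norm ((2 *\<^sub>R prox \<gamma> h a - a) - (2 *\<^sub>R prox \<gamma> h b - b)) \<le> norm (a - b)"
proof -
  define d where "d = prox \<gamma> h a - prox \<gamma> h b"
  define e where "e = a - b"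
  have fne: "(norm d)\<^sup>2 \<le> d \<bullet> e" using prox_fne[OF plc g] by (simp add: d_def e_def)
  have eq: "(2 *\<^sub>R prox \<gamma> h a - a) - (2 *\<^sub>R prox \<gamma> h b - b) = 2 *\<^sub>R d + (- e)"
    by (simp add: d_def e_def algebra_simps)
  have "(norm (2 *\<^sub>R d + (- e)))\<^sup>2 = 4 * (norm d)\<^sup>2 + (norm e)\<^sup>2 - 4 * (d \<bullet> e)"
    unfolding norm_add_sq norm_scale_sq by simp
  then have "(norm (2 *\<^sub>R d + (- e)))\<^sup>2 \<le> (norm e)\<^sup>2" using fne by simp
  then have "norm (2 *\<^sub>R d + (- e)) \<le> norm e" by (rule power2_le_imp_le) simp
  then show ?thesis unfolding eq by (simp add: e_def)
qed



lemma km_identity: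
  fixes a b :: "'a::real_inner" and l :: real
  shows "(norm ((1 - l) *\<^sub>R a + l *\<^sub>R b))\<^sup>2
    = (1 - l) * (norm a)\<^sup>2 + l * (norm b)\<^sup>2 - l * (1 - l) * (norm (a - b))\<^sup>2"
proof -
  have e1: "(norm ((1 - l) *\<^sub>R a + l *\<^sub>R b))\<^sup>2 = (1 - l)\<^sup>2 * (norm a)\<^sup>2 + l\<^sup>2 * (norm b)\<^sup>2 + 2 * ((1 - l) * l * (a \<bullet> b))"
    unfolding norm_add_sq norm_scale_sq by simp
  have e2: "(norm (a - b))\<^sup>2 = (norm a)\<^sup>2 + (norm b)\<^sup>2 - 2 * (a \<bullet> b)" by (rule nd2)
  show ?thesis unfolding e1 e2 by (simp add: algebra_simps power2_eq_square)
qed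

lemma KM:
  fixes N :: "'a::euclidean_space \<Rightarrow> 'a" and z :: "nat \<Rightarrow> 'a" and \<tau> :: "nat \<Rightarrow> real"
  assumes ne: "\<And>a b. norm (N a - N b) \<le> norm (a - b)"
    and fp: "N p = p"
    and tau: "\<And>k. 0 < \<tau> k \<and> \<tau> k < 2"
    and dv: "filterlim (\<lambda>n. \<Sum>k<n. \<tau> k * (2 - \<tau> k)) at_top sequentially"
    and it: "\<And>k. z (Suc k) = z k + (\<tau> k / 2) *\<^sub>R (N (z k) - z k)"
  shows "\<exists>zb. N zb = zb \<and> z \<longlonglongrightarrow> zb \<and> (\<lambda>k. N (z k) - z k) \<longlonglongrightarrow> 0"
proof -
  define D where "D k = norm (N (z k) - z k)" for k
  define c where "c k = \<tau> k * (2 - \<tau> k) / 4" for k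
  have c0: "c k \<ge> 0" for k using tau[of k] by (simp add: c_def)
  have fejer: "(norm (z (Suc k) - q))\<^sup>2 \<le> (norm (z k - q))\<^sup>2 - c k * (D k)\<^sup>2" if q: "N q = q" for q k
  proof -
    define l where "l = \<tau> k / 2"
    have e: "z (Suc k) - q = (1 - l) *\<^sub>R (z k - q) + l *\<^sub>R (N (z k) - q)"
      unfolding it l_def by (simp add: algebra_simps)
    have nb: "norm (N (z k) - q) \<le> norm (z k - q)" using ne[of "z k" q] q by simp
    then have nb2: "(norm (N (z k) - q))\<^sup>2 \<le> (norm (z k - q))\<^sup>2" by (simp add: power_mono)
    have l: "0 \<le> l" "l \<le> 1" using tau[of k] by (auto simp: l_def)
    have dd: "norm ((z k - q) - (N (z k) - q)) = D k" by (simp add: D_def norm_minus_commute)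
    have cl: "c k = l * (1 - l)" unfolding c_def l_def by (simp add: field_simps)
    have "(norm (z (Suc k) - q))\<^sup>2 = (1 - l) * (norm (z k - q))\<^sup>2 + l * (norm (N (z k) - q))\<^sup>2 - c k * (D k)\<^sup>2"
      unfolding e km_identity dd cl by simp
    also have "\<dots> \<le> (1 - l) * (norm (z k - q))\<^sup>2 + l * (norm (z k - q))\<^sup>2 - c k * (D k)\<^sup>2"
      using nb2 l by (simp add: mult_left_mono)
    also have "\<dots> = (norm (z k - q))\<^sup>2 - c k * (D k)\<^sup>2" by (simp add: algebra_simps)
    finally show ?thesis .
  qed
  have Ddec: "D (Suc k) \<le> D k" for k
  proof -
    define l where "l = \<tau> k / 2"
    have l: "0 \<le> l" "l \<le> 1" using tau[of k] by (auto simp: l_def)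
    have e: "N (z (Suc k)) - z (Suc k) = (N (z (Suc k)) - N (z k)) + (1 - l) *\<^sub>R (N (z k) - z k)"
      unfolding it l_def by (simp add: algebra_simps)
    have "D (Suc k) \<le> norm (N (z (Suc k)) - N (z k)) + norm ((1 - l) *\<^sub>R (N (z k) - z k))"
      unfolding D_def e by (rule norm_triangle_ineq)
    also have "\<dots> \<le> norm (z (Suc k) - z k) + (1 - l) * D k"
      using ne[of "z (Suc k)" "z k"] l by (simp add: D_def)
    also have "norm (z (Suc k) - z k) = l * D k"
      unfolding it l_def D_def using tau[of k] by simp
    finally show ?thesis by (simp add: algebra_simps)
  qed
  have sumb: "(norm (z n - p))\<^sup>2 + (\<Sum>k<n. c k * (D k)\<^sup>2) \<le> (norm (z 0 - p))\<^sup>2" for n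
  proof (induction n)
    case 0 then show ?case by simp
  next
    case (Suc n)
    then show ?case using fejer[OF fp, of n] by simp
  qed
  define C0 where "C0 = (norm (z 0 - p))\<^sup>2"
  have Dlim: "D \<longlonglongrightarrow> 0"
  proof (rule LIMSEQ_I)
    fix r :: real assume r: "0 < r"
    have "\<exists>K. D K < r"
    proof (rule ccontr)
      assume "\<not> (\<exists>K. D K < r)"
      then have Dr: "D k \<ge> r" for k by (simp add: not_less)
      have "\<forall>\<^sub>F n in sequentially. 4 * C0 / r\<^sup>2 + 1 \<le> (\<Sum>k<n. \<tau> k * (2 - \<tau> k))"
        using dv by (simp add: filterlim_at_top)
      then obtain n where n: "4 * C0 / r\<^sup>2 + 1 \<le> (\<Sum>k<n. \<tau> k * (2 - \<tau> k))"
        by (meson eventually_sequentially order_refl)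
      have "(\<Sum>k<n. c k * r\<^sup>2) \<le> (\<Sum>k<n. c k * (D k)\<^sup>2)"
        using Dr c0 r by (intro sum_mono mult_left_mono power_mono) (auto intro: less_imp_le)
      also have "\<dots> \<le> C0" using sumb[of n] zero_le_power2[of "norm (z n - p)"] unfolding C0_def by linarith
      finally have "(\<Sum>k<n. c k) * r\<^sup>2 \<le> C0" by (simp add: sum_distrib_right)
      moreover have "(\<Sum>k<n. c k) = (\<Sum>k<n. \<tau> k * (2 - \<tau> k)) / 4"
        by (simp add: c_def sum_divide_distrib)
      ultimately have "(\<Sum>k<n. \<tau> k * (2 - \<tau> k)) \<le> 4 * C0 / r\<^sup>2"
        using r by (simp add: field_simps)
      then show False using n by simp
    qed
    then obtain K where K: "D K < r" by blast
    have dD: "decseq D" by (rule decseq_SucI) (rule Ddec)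
    have "\<forall>n\<ge>K. D n < r"
    proof (intro allI impI)
      fix n assume "K \<le> n"
      then have "D n \<le> D K" by (rule decseqD[OF dD])
      then show "D n < r" using K by simp
    qed
    then show "\<exists>no. \<forall>n\<ge>no. norm (D n - 0) < r" by (auto simp: D_def)
  qed
  have Deq: "D = (\<lambda>k. norm (N (z k) - z k))" by (simp add: D_def fun_eq_iff)
  have Nlim: "(\<lambda>k. N (z k) - z k) \<longlonglongrightarrow> 0"
    using Dlim unfolding Deq by (simp only: tendsto_norm_zero_iff)
  have zb: "norm (z k - p) \<le> norm (z 0 - p)" for k
  proof -
    have "(norm (z k - p))\<^sup>2 \<le> (norm (z 0 - p))\<^sup>2"
    proof -
      have "0 \<le> (\<Sum>i<k. c i * (D i)\<^sup>2)" by (intro sum_nonneg mult_nonneg_nonneg c0) simp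
      then show ?thesis using sumb[of k] by linarith
    qed
    then show ?thesis by (rule power2_le_imp_le) simp
  qed
  have "bounded (range z)" unfolding bounded_iff
  proof (intro exI ballI)
    fix y assume "y \<in> range z"
    then obtain k where "y = z k" by blast
    then show "norm y \<le> norm (z 0 - p) + norm p" using zb[of k] norm_triangle_ineq[of "z k - p" p] by simp
  qed
  then obtain zl r where r: "strict_mono r" and lim: "(z \<circ> r) \<longlonglongrightarrow> zl"
    using bounded_imp_convergent_subsequence by blast
  have Nzl: "N zl = zl"
  proof -
    have bnd: "norm (N zl - zl) \<le> 2 * norm (z (r n) - zl) + D (r n)" for n
    proof -
      have "norm (N zl - zl) \<le> norm (N zl - N (z (r n))) + norm (N (z (r n)) - z (r n)) + norm (z (r n) - zl)"
        using norm_triangle_ineq[of "N zl - N (z (r n))" "N (z (r n)) - z (r n)"]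
          norm_triangle_ineq[of "N zl - N (z (r n))+ (N (z (r n)) - z (r n))" "z (r n) - zl"]
        by (simp add: algebra_simps)
      also have "norm (N zl - N (z (r n))) \<le> norm (z (r n) - zl)"
        using ne[of zl "z (r n)"] by (simp add: norm_minus_commute)
      finally show ?thesis by (simp add: D_def)
    qed
    have l1: "(\<lambda>n. norm (z (r n) - zl)) \<longlonglongrightarrow> 0"
      using lim by (simp add: o_def tendsto_norm_zero_iff LIM_zero_iff)
    have l2: "(\<lambda>n. D (r n)) \<longlonglongrightarrow> 0" using LIMSEQ_subseq_LIMSEQ[OF Dlim r] by (simp add: o_def)
    have "(\<lambda>n. 2 * norm (z (r n) - zl) + D (r n)) \<longlonglongrightarrow> 2 * 0 + 0"
      by (intro tendsto_intros l1 l2)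
    then have "norm (N zl - zl) \<le> 0"
      using bnd by (intro tendsto_le[OF trivial_limit_sequentially _ tendsto_const]) auto
    then show ?thesis by simp
  qed
  have zlim: "z \<longlonglongrightarrow> zl"
  proof -
    define E where "E k = norm (z k - zl)" for k
    have Edec: "decseq E"
    proof (rule decseq_SucI)
      fix k
      have "(E (Suc k))\<^sup>2 \<le> (E k)\<^sup>2"
        using fejer[OF Nzl, of k] c0[of k] zero_le_power2[of "D k"] unfolding E_def
        by (smt (verit) mult_nonneg_nonneg)
      then show "E (Suc k) \<le> E k" by (rule power2_le_imp_le) (simp add: E_def)
    qed
    have El: "(\<lambda>n. E (r n)) \<longlonglongrightarrow> 0"
      using lim by (simp add: o_def E_def tendsto_norm_zero_iff LIM_zero_iff)
    show ?thesis
    proof (rule LIMSEQ_I)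
      fix e :: real assume e: "0 < e"
      obtain n where n: "E (r n) < e"
        using order_tendstoD(2)[OF El e] by (meson eventually_sequentially order_refl)
      have "\<forall>k\<ge>r n. norm (z k - zl) < e"
      proof (intro allI impI)
        fix k assume "r n \<le> k"
        then have "E k \<le> E (r n)" by (rule decseqD[OF Edec])
        then show "norm (z k - zl) < e" using n by (simp add: E_def)
      qed
      then show "\<exists>no. \<forall>k\<ge>no. norm (z k - zl) < e" by blast
    qed
  qed
  show ?thesis using Nzl zlim Nlim by blast
qed



lemma fenchel_easy:
  fixes R :: "'a::real_inner \<Rightarrow> ereal"
  assumes pR: "proper_fun R" and q: "q \<in> subdiff R p"
  shows "p \<in> subdiff (conjugate R) q"
proof -
  have pE: "p \<in> edom R" and sg: "\<And>y. y \<in> edom R \<Longrightarrow> hr R p + q \<bullet> (y - p) \<le> hr R y"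
    using q subdiff_real[OF pR] by auto
  define rp where "rp = hr R p"
  have Rp: "R p = ereal rp" using proper_fin[OF pR pE] by (simp add: rp_def)
  have le: "ereal (q \<bullet> y) - R y \<le> ereal (q \<bullet> p - rp)" for y
  proof (cases "y \<in> edom R")
    case True
    have "rp + q \<bullet> (y - p) \<le> hr R y" using sg[OF True] by (simp add: rp_def)
    then have "q \<bullet> y - hr R y \<le> q \<bullet> p - rp" by (simp add: inner_diff_right)
    then show ?thesis by (subst proper_fin[OF pR True]) simp
  next
    case False then show ?thesis by (simp add: notin_edom)
  qed
  have cq: "conjugate R q = ereal (q \<bullet> p - rp)"
    unfolding conjugate_def
  proof (rule antisym)
    show "(SUP y. ereal (q \<bullet> y) - R y) \<le> ereal (q \<bullet> p - rp)" by (rule SUP_least) (rule le)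
    have "ereal (q \<bullet> p) - R p \<le> (SUP y. ereal (q \<bullet> y) - R y)" by (rule SUP_upper) simp
    then show "ereal (q \<bullet> p - rp) \<le> (SUP y. ereal (q \<bullet> y) - R y)" by (simp add: Rp)
  qed
  have cw: "ereal (w \<bullet> p - rp) \<le> conjugate R w" for w
  proof -
    have "ereal (w \<bullet> p) - R p \<le> (SUP y. ereal (w \<bullet> y) - R y)" by (rule SUP_upper) simp
    then show ?thesis by (simp add: Rp conjugate_def)
  qed
  show ?thesis unfolding subdiff_def
  proof (intro CollectI conjI allI)
    show "conjugate R q < \<infinity>" by (simp add: cq)
    fix w
    have "conjugate R q + ereal (p \<bullet> (w - q)) = ereal (w \<bullet> p - rp)"
      by (simp add: cq inner_diff_right inner_commute)
    then show "conjugate R q + ereal (p \<bullet> (w - q)) \<le> conjugate R w" using cw[of w] by simp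
  qed
qed

lemma convex_subdiff:
  fixes R :: "'a::real_inner \<Rightarrow> ereal"
  shows "convex (subdiff R x)"
proof (rule convexI)
  fix u v :: 'a and a b :: real
  assume u: "u \<in> subdiff R x" and v: "v \<in> subdiff R x" and ab: "0 \<le> a" "0 \<le> b" "a + b = 1"
  have Rx: "R x < \<infinity>" using u by (simp add: subdiff_def)
  show "a *\<^sub>R u + b *\<^sub>R v \<in> subdiff R x" unfolding subdiff_def
  proof (intro CollectI conjI allI Rx)
    fix y
    have iu: "R x + ereal (u \<bullet> (y - x)) \<le> R y" and iv: "R x + ereal (v \<bullet> (y - x)) \<le> R y"
      using u v by (auto simp: subdiff_def)
    show "R x + ereal ((a *\<^sub>R u + b *\<^sub>R v) \<bullet> (y - x)) \<le> R y"
    proof (cases "R x")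
      case (real r)
      show ?thesis
      proof (cases "R y")
        case (real s)
        have "r + u \<bullet> (y - x) \<le> s" "r + v \<bullet> (y - x) \<le> s" using iu iv \<open>R x = ereal r\<close> real by auto
        then have "a * (r + u \<bullet> (y - x)) + b * (r + v \<bullet> (y - x)) \<le> a * s + b * s"
          using ab by (intro add_mono mult_left_mono) auto
        moreover have "(a *\<^sub>R u + b *\<^sub>R v) \<bullet> (y - x) = a * (u \<bullet> (y - x)) + b * (v \<bullet> (y - x))"
          by (simp add: inner_add_left)
        moreover have "a * s + b * s = s" "a * r + b * r = r"
          using ab(3) by (simp_all add: distrib_right[symmetric])
        moreover have "a * (r + u \<bullet> (y - x)) + b * (r + v \<bullet> (y - x)) =
            (a * r + b * r) + (a * (u \<bullet> (y - x)) + b * (v \<bullet> (y - x)))" by (simp add: algebra_simps)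
        ultimately have "r + (a *\<^sub>R u + b *\<^sub>R v) \<bullet> (y - x) \<le> s" by argo
        then show ?thesis using \<open>R x = ereal r\<close> real by simp
      next
        case PInf then show ?thesis by simp
      next
        case MInf then show ?thesis using iu \<open>R x = ereal r\<close> by simp
      qed
    next
      case PInf then show ?thesis using Rx by simp
    next
      case MInf then show ?thesis by simp
    qed
  qed
qed

lemma stratum_mem:
  assumes S: "stratification \<S> D" and x: "x \<in> D"
  shows "stratum \<S> x \<in> \<S> \<and> x \<in> stratum \<S> x"
proof -
  have U: "\<Union>\<S> = D" and disj: "\<forall>M\<in>\<S>. \<forall>M'\<in>\<S>. M \<noteq> M' \<longrightarrow> M \<inter> M' = {}"
    using S unfolding stratification_def by simp_all
  obtain M where M: "M \<in> \<S>" "x \<in> M" using U x by blast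
  have u: "M' = M" if "M' \<in> \<S> \<and> x \<in> M'" for M'
    using disj M that by blast
  have "stratum \<S> x = M" unfolding stratum_def
  proof (rule the_equality)
    show "M \<in> \<S> \<and> x \<in> M" using M by simp
    fix M' assume "M' \<in> \<S> \<and> x \<in> M'" then show "M' = M" by (rule u)
  qed
  then show ?thesis using M by simp
qed

lemma ev_strat:
  fixes p :: "nat \<Rightarrow> 'a::topological_space"
  assumes S: "stratification \<S> D" and lim: "p \<longlonglongrightarrow> ps" and ps: "ps \<in> D"
    and ev: "\<forall>\<^sub>F k in sequentially. p k \<in> D"
  shows "\<forall>\<^sub>F k in sequentially. strat_le (stratum \<S> ps) (stratum \<S> (p k))"
proof -
  define B where "B = {M \<in> \<S>. \<not> strat_le (stratum \<S> ps) M}"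
  have fin: "finite B" using S unfolding B_def stratification_def by (simp add: finite_Collect_conjI)
  have sps: "stratum \<S> ps \<in> \<S>" "ps \<in> stratum \<S> ps" using stratum_mem[OF S ps] by auto
  have nc: "ps \<notin> closure M" if "M \<in> B" for M
  proof
    assume "ps \<in> closure M"
    then have "stratum \<S> ps \<inter> closure M \<noteq> {}" using sps by blast
    moreover have "\<forall>M\<in>\<S>. \<forall>M'\<in>\<S>. M \<inter> closure M' \<noteq> {} \<longrightarrow> M \<subseteq> closure M'"
      using S unfolding stratification_def by simp
    ultimately have "stratum \<S> ps \<subseteq> closure M" using sps(1) that unfolding B_def by blast
    then show False using that unfolding B_def strat_le_def by blast
  qed
  have "\<forall>M\<in>B. \<forall>\<^sub>F k in sequentially. p k \<in> - closure M"
  proof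
    fix M assume M: "M \<in> B"
    show "\<forall>\<^sub>F k in sequentially. p k \<in> - closure M"
      by (rule topological_tendstoD[OF lim]) (use nc[OF M] in auto)
  qed
  then have "\<forall>\<^sub>F k in sequentially. \<forall>M\<in>B. p k \<in> - closure M"
    by (rule eventually_ball_finite[OF fin])
  then show ?thesis using ev
  proof (eventually_elim)
    case (elim k)
    have m: "stratum \<S> (p k) \<in> \<S>" "p k \<in> stratum \<S> (p k)" using stratum_mem[OF S elim(2)] by auto
    then have "p k \<in> closure (stratum \<S> (p k))" using closure_subset by blast
    then have "stratum \<S> (p k) \<notin> B" using elim(1) by blast
    then show ?case using m(1) unfolding B_def by simp
  qed
qed



lemma ident:
  fixes R :: "'a::euclidean_space \<Rightarrow> ereal"
  assumes ms: "mirror_stratifiable R \<S> \<S>s" and pR: "proper_fun R"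
    and pl: "p \<longlonglongrightarrow> ps" and ql: "q \<longlonglongrightarrow> qs" and qs: "qs \<in> subdiff R ps"
    and ev: "\<forall>\<^sub>F k in sequentially. q k \<in> subdiff R (p k)"
  shows "\<forall>\<^sub>F k in sequentially. strat_le (stratum \<S> ps) (stratum \<S> (p k))
            \<and> strat_le (stratum \<S> (p k)) (Jmap (conjugate R) (stratum \<S>s qs))"
proof -
  have St: "stratification \<S> (dom_subdiff R)"
    and Sts: "stratification \<S>s (dom_subdiff (conjugate R))"
    and J2: "\<forall>Ms\<in>\<S>s. Jmap (conjugate R) Ms \<in> \<S>"
    and bij: "\<forall>M\<in>\<S>. \<forall>Ms\<in>\<S>s. Ms = Jmap R M \<longleftrightarrow> Jmap (conjugate R) Ms = M"
    and ord: "\<forall>M\<in>\<S>. \<forall>M'\<in>\<S>. strat_le M M' \<longleftrightarrow> strat_le (Jmap R M') (Jmap R M)"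
    using ms unfolding mirror_stratifiable_def by simp_all
  have front: "\<forall>M\<in>\<S>. \<forall>M'\<in>\<S>. M \<inter> closure M' \<noteq> {} \<longrightarrow> M \<subseteq> closure M'"
    using St unfolding stratification_def by simp
  have psD: "ps \<in> dom_subdiff R" using qs by (auto simp: dom_subdiff_def)
  have qsD: "qs \<in> dom_subdiff (conjugate R)"
    using fenchel_easy[OF pR qs] by (auto simp: dom_subdiff_def)
  have evp: "\<forall>\<^sub>F k in sequentially. p k \<in> dom_subdiff R"
    using ev by (rule eventually_mono) (auto simp: dom_subdiff_def)
  have evq: "\<forall>\<^sub>F k in sequentially. q k \<in> dom_subdiff (conjugate R)"
    using ev by (rule eventually_mono) (use fenchel_easy[OF pR] in \<open>auto simp: dom_subdiff_def\<close>)
  have E1: "\<forall>\<^sub>F k in sequentially. strat_le (stratum \<S> ps) (stratum \<S> (p k))"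
    by (rule ev_strat[OF St pl psD evp])
  have E2: "\<forall>\<^sub>F k in sequentially. strat_le (stratum \<S>s qs) (stratum \<S>s (q k))"
    by (rule ev_strat[OF Sts ql qsD evq])
  from E1 E2 ev evp evq show ?thesis
  proof (eventually_elim)
    case (elim k)
    define Mk where "Mk = stratum \<S>s (q k)"
    define Mq where "Mq = stratum \<S>s qs"
    have Mk: "Mk \<in> \<S>s" "q k \<in> Mk" using stratum_mem[OF Sts elim(5)] by (auto simp: Mk_def)
    have Mq: "Mq \<in> \<S>s" using stratum_mem[OF Sts qsD] by (auto simp: Mq_def)
    define M1 where "M1 = Jmap (conjugate R) Mk"
    define M2 where "M2 = Jmap (conjugate R) Mq"
    have M1: "M1 \<in> \<S>" using J2 Mk by (simp add: M1_def)
    have M2: "M2 \<in> \<S>" using J2 Mq by (simp add: M2_def)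
    have e1: "Mk = Jmap R M1" using bij M1 Mk(1) by (simp add: M1_def)
    have e2: "Mq = Jmap R M2" using bij M2 Mq by (simp add: M2_def)
    have "strat_le M1 M2" using ord M1 M2 elim(2) e1 e2 by (simp add: Mk_def Mq_def)
    then have c12: "closure M1 \<subseteq> closure M2" unfolding strat_le_def
      by (simp add: closure_minimal)
    have pk: "p k \<in> subdiff (conjugate R) (q k)" by (rule fenchel_easy[OF pR elim(3)])
    have "p k \<in> closure (subdiff (conjugate R) (q k))" using pk closure_subset by blast
    then have "p k \<in> closure (rel_interior (subdiff (conjugate R) (q k)))"
      using convex_closure_rel_interior[OF convex_subdiff[of "conjugate R" "q k"]] by simp
    moreover have "rel_interior (subdiff (conjugate R) (q k)) \<subseteq> M1"
      unfolding M1_def Jmap_def using Mk(2) by blast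
    ultimately have pkc: "p k \<in> closure M1" using closure_mono by blast
    have sp: "stratum \<S> (p k) \<in> \<S>" "p k \<in> stratum \<S> (p k)" using stratum_mem[OF St elim(4)] by auto
    then have "stratum \<S> (p k) \<inter> closure M1 \<noteq> {}" using pkc by blast
    then have "stratum \<S> (p k) \<subseteq> closure M1" using front sp(1) M1 by blast
    then have "strat_le (stratum \<S> (p k)) M2" using c12 unfolding strat_le_def by blast
    then show ?case using elim(1) by (simp add: M2_def Mq_def)
  qed
qed



theorem theorem5p2:
  fixes f g :: "'a::euclidean_space \<Rightarrow> ereal"
    and \<gamma> :: real and \<tau> :: "nat \<Rightarrow> real"
    and z x v :: "nat \<Rightarrow> 'a"
  assumes f: "proper_lsc_convex f" and g: "proper_lsc_convex g"
    and ri: "rel_interior (edom f) \<inter> rel_interior (edom g) \<noteq> {}"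
    and argmin: "Argmin (\<lambda>y. f y + g y) \<noteq> {}"
    and gamma: "\<gamma> > 0"
    and tau: "\<And>k. 0 < \<tau> k \<and> \<tau> k < 2"
    and tau_div: "filterlim (\<lambda>n. \<Sum>k<n. \<tau> k * (2 - \<tau> k)) at_top sequentially"
    and x_def: "\<And>k. x k = prox \<gamma> g (z k)"
    and v_def: "\<And>k. v (Suc k) = prox \<gamma> f (2 *\<^sub>R x k - z k)"
    and z_def: "\<And>k. z (Suc k) = z k + \<tau> k *\<^sub>R (v (Suc k) - x k)"
  shows "\<exists>zs xs. z \<longlonglongrightarrow> zs \<and> xs = prox \<gamma> g zs \<and> xs \<in> Argmin (\<lambda>y. f y + g y)
     \<and> x \<longlonglongrightarrow> xs \<and> v \<longlonglongrightarrow> xs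
     \<and> (let us = (1 / \<gamma>) *\<^sub>R (zs - xs) in
          (\<forall>Sg Sgs. mirror_stratifiable g Sg Sgs \<longrightarrow>
             (\<forall>\<^sub>F k in sequentially.
                strat_le (stratum Sg xs) (stratum Sg (x k))
              \<and> strat_le (stratum Sg (x k)) (Jmap (conjugate g) (stratum Sgs us))))
        \<and> (\<forall>Sf Sfs. mirror_stratifiable f Sf Sfs \<longrightarrow>
             (\<forall>\<^sub>F k in sequentially.
                strat_le (stratum Sf xs) (stratum Sf (v k))
              \<and> strat_le (stratum Sf (v k)) (Jmap (conjugate f) (stratum Sfs (- us))))))"
proof -
  have pf: "proper_fun f" and cf: "convex_fun f" using f by (auto simp: proper_lsc_convex_def)
  have pg: "proper_fun g" and cg: "convex_fun g" using g by (auto simp: proper_lsc_convex_def)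
  obtain c where c: "c \<in> rel_interior (edom f)" "c \<in> rel_interior (edom g)" using ri by blast
  obtain xm where xm: "xm \<in> Argmin (\<lambda>y. f y + g y)" using argmin by blast
  obtain u where u: "u \<in> subdiff g xm" "- u \<in> subdiff f xm" using SR[OF pf cf pg cg c xm] by blast
  define Rg where "Rg w = 2 *\<^sub>R prox \<gamma> g w - w" for w
  define Rf where "Rf w = 2 *\<^sub>R prox \<gamma> f w - w" for w
  define N where "N w = Rf (Rg w)" for w
  have ne: "norm (N a - N b) \<le> norm (a - b)" for a b
  proof -
    have "norm (N a - N b) \<le> norm (Rg a - Rg b)"
      unfolding N_def Rf_def by (rule refl_ne[OF f gamma])
    also have "\<dots> \<le> norm (a - b)" unfolding Rg_def by (rule refl_ne[OF g gamma])
    finally show ?thesis .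
  qed
  define p where "p = xm + \<gamma> *\<^sub>R u"
  have pg1: "prox \<gamma> g p = xm"
    by (rule prox_eq[OF pg gamma]) (use u(1) gamma in \<open>simp add: p_def\<close>)
  have pf1: "prox \<gamma> f (xm - \<gamma> *\<^sub>R u) = xm"
    by (rule prox_eq[OF pf gamma]) (use u(2) gamma in \<open>simp add: p_def\<close>)
  have Np: "N p = p"
  proof -
    have Rgp: "Rg p = xm - \<gamma> *\<^sub>R u" unfolding Rg_def pg1 by (simp add: p_def scaleR_2)
    have "N p = 2 *\<^sub>R prox \<gamma> f (xm - \<gamma> *\<^sub>R u) - (xm - \<gamma> *\<^sub>R u)"
      unfolding N_def Rf_def Rgp ..
    also have "\<dots> = p" unfolding pf1 by (simp add: p_def scaleR_2)
    finally show ?thesis .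
  qed
  have it: "z (Suc k) = z k + (\<tau> k / 2) *\<^sub>R (N (z k) - z k)" for k
  proof -
    have "N (z k) - z k = 2 *\<^sub>R (v (Suc k) - x k)"
      unfolding N_def Rf_def Rg_def v_def x_def by (simp add: algebra_simps)
    then show ?thesis unfolding z_def by simp
  qed
  obtain zb where zb: "N zb = zb" "z \<longlonglongrightarrow> zb" "(\<lambda>k. N (z k) - z k) \<longlonglongrightarrow> 0"
    using KM[OF ne Np tau tau_div it] by blast
  define xs where "xs = prox \<gamma> g zb"
  define us where "us = (1 / \<gamma>) *\<^sub>R (zb - xs)"
  have xlim: "x \<longlonglongrightarrow> xs"
  proof (rule LIM_zero_cancel, rule Lim_null_comparison)
    show "\<forall>\<^sub>F k in sequentially. norm (x k - xs) \<le> norm (z k - zb)"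
      unfolding x_def xs_def by (intro always_eventually allI prox_ne[OF g gamma])
    show "(\<lambda>k. norm (z k - zb)) \<longlonglongrightarrow> 0"
      using zb(2) by (simp add: tendsto_norm_zero_iff LIM_zero_iff)
  qed
  have vS: "v (Suc k) = x k + (1/2) *\<^sub>R (N (z k) - z k)" for k
    unfolding N_def Rf_def Rg_def v_def x_def by (simp add: algebra_simps)
  have vlim1: "(\<lambda>k. v (Suc k)) \<longlonglongrightarrow> xs"
  proof -
    have "(\<lambda>k. x k + (1/2) *\<^sub>R (N (z k) - z k)) \<longlonglongrightarrow> xs + (1/2) *\<^sub>R 0"
      by (intro tendsto_intros xlim zb(3))
    then show ?thesis unfolding vS by simp
  qed
  then have vlim: "v \<longlonglongrightarrow> xs" by (rule LIMSEQ_imp_Suc)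
  have Rgzb: "Rg zb = 2 *\<^sub>R xs - zb" by (simp add: Rg_def xs_def)
  have pfx: "prox \<gamma> f (2 *\<^sub>R xs - zb) = xs"
  proof -
    have "2 *\<^sub>R prox \<gamma> f (2 *\<^sub>R xs - zb) - (2 *\<^sub>R xs - zb) = zb"
      using zb(1) unfolding N_def Rf_def Rgzb .
    then have "2 *\<^sub>R prox \<gamma> f (2 *\<^sub>R xs - zb) = 2 *\<^sub>R xs" by (simp add: algebra_simps)
    then show ?thesis by simp
  qed
  have usg: "us \<in> subdiff g xs" using prox_sub[OF g gamma, of zb] by (simp add: us_def xs_def)
  have usf: "- us \<in> subdiff f xs"
  proof -
    have "(1/\<gamma>) *\<^sub>R ((2 *\<^sub>R xs - zb) - xs) \<in> subdiff f xs"
      using prox_sub[OF f gamma, of "2 *\<^sub>R xs - zb"] unfolding pfx .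
    moreover have "(1/\<gamma>) *\<^sub>R ((2 *\<^sub>R xs - zb) - xs) = - us"
      by (simp add: us_def algebra_simps scaleR_2)
    ultimately show ?thesis by simp
  qed
  have xsE: "xs \<in> edom f" "xs \<in> edom g" using usf usg subdiff_real[OF pf] subdiff_real[OF pg] by auto
  have amin: "xs \<in> Argmin (\<lambda>y. f y + g y)" unfolding Argmin_def
  proof (intro CollectI allI)
    fix y
    show "f xs + g xs \<le> f y + g y"
    proof (cases "y \<in> edom f \<and> y \<in> edom g")
      case True
      have a: "hr f xs + (- us) \<bullet> (y - xs) \<le> hr f y" using usf True subdiff_real[OF pf] by blast
      have b: "hr g xs + us \<bullet> (y - xs) \<le> hr g y" using usg True subdiff_real[OF pg] by blast
      have "hr f xs + hr g xs \<le> hr f y + hr g y" using a b by simp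
      then show ?thesis using sum_fin[OF pf pg xsE] sum_fin[OF pf pg, of y] True by simp
    next
      case False
      have nf: "f y \<noteq> - \<infinity>" "g y \<noteq> - \<infinity>" using pf pg by (auto simp: proper_fun_def)
      have dj: "f y = \<infinity> \<or> g y = \<infinity>" using False notin_edom[of y f] notin_edom[of y g] by auto
      have inf: "f y + g y = \<infinity>" using nf dj by (cases "f y"; cases "g y") auto
      show ?thesis unfolding inf by simp
    qed
  qed
  have gpart: "\<forall>\<^sub>F k in sequentially.
                strat_le (stratum Sg xs) (stratum Sg (x k))
              \<and> strat_le (stratum Sg (x k)) (Jmap (conjugate g) (stratum Sgs us))"
    if ms: "mirror_stratifiable g Sg Sgs" for Sg Sgs
  proof (rule ident[where q="\<lambda>k. (1/\<gamma>) *\<^sub>R (z k - x k)", OF ms pg xlim _ usg])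
    show "(\<lambda>k. (1/\<gamma>) *\<^sub>R (z k - x k)) \<longlonglongrightarrow> us"
      unfolding us_def by (intro tendsto_intros zb(2) xlim)
    show "\<forall>\<^sub>F k in sequentially. (1/\<gamma>) *\<^sub>R (z k - x k) \<in> subdiff g (x k)"
      unfolding x_def by (intro always_eventually allI prox_sub[OF g gamma])
  qed
  have fpart: "\<forall>\<^sub>F k in sequentially.
                strat_le (stratum Sf xs) (stratum Sf (v k))
              \<and> strat_le (stratum Sf (v k)) (Jmap (conjugate f) (stratum Sfs (- us)))"
    if ms: "mirror_stratifiable f Sf Sfs" for Sf Sfs
  proof -
    have "\<forall>\<^sub>F k in sequentially.
                strat_le (stratum Sf xs) (stratum Sf (v (Suc k)))
              \<and> strat_le (stratum Sf (v (Suc k))) (Jmap (conjugate f) (stratum Sfs (- us)))"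
    proof (rule ident[where q="\<lambda>k. (1/\<gamma>) *\<^sub>R ((2 *\<^sub>R x k - z k) - v (Suc k))", OF ms pf vlim1 _ usf])
      have "(\<lambda>k. (1/\<gamma>) *\<^sub>R ((2 *\<^sub>R x k - z k) - v (Suc k))) \<longlonglongrightarrow> (1/\<gamma>) *\<^sub>R ((2 *\<^sub>R xs - zb) - xs)"
        by (intro tendsto_intros zb(2) xlim vlim1)
      moreover have "(1/\<gamma>) *\<^sub>R ((2 *\<^sub>R xs - zb) - xs) = - us"
        by (simp add: us_def algebra_simps scaleR_2)
      ultimately show "(\<lambda>k. (1/\<gamma>) *\<^sub>R ((2 *\<^sub>R x k - z k) - v (Suc k))) \<longlonglongrightarrow> - us" by simp
      show "\<forall>\<^sub>F k in sequentially. (1/\<gamma>) *\<^sub>R ((2 *\<^sub>R x k - z k) - v (Suc k)) \<in> subdiff f (v (Suc k))"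
        unfolding v_def by (intro always_eventually allI prox_sub[OF f gamma])
    qed
    then show ?thesis by (rule eventually_sequentially_Suc[THEN iffD1])
  qed
  show ?thesis
    apply (rule exI[of _ zb], rule exI[of _ xs])
    using zb(2) xs_def amin xlim vlim gpart fpart unfolding us_def Let_def by blast
qed



end
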